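(* Let $X,Y$ be metric spaces and $f,g:X\to Y$ be 1-Lipschitz maps. For any two Borel probability measures $\mu,\nu$ on $X$, \[ |d_{\mathrm{KF}}^\mu(f,g)-d_{\mathrm{KF}}^\nu(f,g)|\le 2\,d_{\mathrm P}(\mu,\nu). \]
   Context: For a Borel probability measure $\mu$ on $X$ and maps $f,g:X\to Y$, $d_{\mathrm{KF}}^\mu(f,g):=\inf\{\varepsilon\ge0:\mu(\{x: d_Y(f(x),g(x))>\varepsilon\})\le\varepsilon\}$. $d_{\mathrm P}$ is the Prohorov metric: $d_{\mathrm P}(\mu,\nu):=\inf\{\varepsilon>0:\mu(U_\varepsilon(A))\ge\nu(A)-\varepsilon\ \forall\text{ Borel }A\subset X\}$, $U_\varepsilon(A)$ the open $\varepsilon$-neighborhood. *)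

theory Defs
  imports "HOL-Probability.Probability"
begin

definition ky_fan :: "'a measure \<Rightarrow> ('a \<Rightarrow> 'b::metric_space) \<Rightarrow> ('a \<Rightarrow> 'b) \<Rightarrow> real" where
  "ky_fan \<mu> f g = Inf {\<epsilon>. \<epsilon> \<ge> 0 \<and> measure \<mu> {x \<in> space \<mu>. dist (f x) (g x) > \<epsilon>} \<le> \<epsilon>}"

definition open_nbhd :: "real \<Rightarrow> 'a::metric_space set \<Rightarrow> 'a set" where
  "open_nbhd \<epsilon> A = {x. \<exists>a\<in>A. dist x a < \<epsilon>}"

definition prohorov :: "'a::metric_space measure \<Rightarrow> 'a measure \<Rightarrow> real" where
  "prohorov \<mu> \<nu> = Inf {\<epsilon>. \<epsilon> > 0 \<and>
     (\<forall>A \<in> sets borel. measure \<mu> (open_nbhd \<epsilon> A) \<ge> measure \<nu> A - \<epsilon>)}"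

end

theory Submission
  imports Defs
begin

lemma nbhd_open: "open (open_nbhd e A)"
proof -
  have "open_nbhd e A = (\<Union>a\<in>A. ball a e)"
    unfolding open_nbhd_def by (auto simp: dist_commute)
  thus ?thesis by auto
qed

lemma space_borel_eq: "sets M = sets borel \<Longrightarrow> space M = UNIV"
  by (metis sets_eq_imp_space_eq space_borel)

lemma D_lip:
  fixes f g :: "'a::metric_space \<Rightarrow> 'b::metric_space"
  assumes "1-lipschitz_on UNIV f" and "1-lipschitz_on UNIV g"
  shows "dist (f x) (g x) \<le> dist (f y) (g y) + 2 * dist x y"
proof -
  have "dist (f x) (f y) \<le> dist x y" using assms(1) by (auto dest: lipschitz_onD)
  moreover have "dist (g x) (g y) \<le> dist x y" using assms(2) by (auto dest: lipschitz_onD)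
  moreover have "dist (f x) (g x) \<le> dist (f x) (f y) + dist (f y) (g y) + dist (g y) (g x)"
    by (metis add.commute add_le_cancel_left dist_triangle order_trans dist_commute)
  ultimately show ?thesis by (simp add: dist_commute)
qed

lemma kf_set_props:
  assumes "prob_space M"
  shows "1 \<in> {\<epsilon>. \<epsilon> \<ge> 0 \<and> measure M {x \<in> space M. dist (f x) (g x) > \<epsilon>} \<le> \<epsilon>}"
    and "bdd_below {\<epsilon>::real. \<epsilon> \<ge> 0 \<and> measure M {x \<in> space M. dist (f x) (g x) > \<epsilon>} \<le> \<epsilon>}"
  using prob_space.prob_le_1[OF assms] by (auto intro!: bdd_belowI[of _ 0])

lemma key:
  fixes f g :: "'a::metric_space \<Rightarrow> 'b::metric_space"
    and M N :: "'a measure"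
  assumes lf: "1-lipschitz_on UNIV f" and lg: "1-lipschitz_on UNIV g"
    and sM: "sets M = sets borel" and pM: "prob_space M"
    and sN: "sets N = sets borel" and pN: "prob_space N"
    and e: "e > 0"
    and H: "\<forall>A\<in>sets borel. measure M A \<le> measure N (open_nbhd e A) + e"
  shows "ky_fan M f g \<le> ky_fan N f g + 2 * e"
proof -
  let ?S = "\<lambda>M. {\<epsilon>::real. \<epsilon> \<ge> 0 \<and> measure M {x \<in> space M. dist (f x) (g x) > \<epsilon>} \<le> \<epsilon>}"
  have spM: "space M = UNIV" using sM by (rule space_borel_eq)
  have spN: "space N = UNIV" using sN by (rule space_borel_eq)
  have "ky_fan M f g - 2 * e \<le> Inf (?S N)"
  proof (rule cInf_greatest)
    show "?S N \<noteq> {}" using kf_set_props(1)[OF pN] by blast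
  next
    fix d assume d: "d \<in> ?S N"
    define A where "A = {x. dist (f x) (g x) > d + 2 * e}"
    have cont: "continuous_on UNIV (\<lambda>x. dist (f x) (g x))"
      using lf lg by (intro continuous_intros lipschitz_on_continuous_on)+
    have "open A" unfolding A_def
      using cont by (auto intro: open_Collect_less continuous_intros simp: continuous_on_const)
    hence Ab: "A \<in> sets borel" by auto
    have sub: "open_nbhd e A \<subseteq> {x. dist (f x) (g x) > d}"
    proof
      fix x assume "x \<in> open_nbhd e A"
      then obtain a where a: "a \<in> A" "dist x a < e" unfolding open_nbhd_def by auto
      have "dist (f a) (g a) \<le> dist (f x) (g x) + 2 * dist a x" by (rule D_lip[OF lf lg])
      thus "x \<in> {x. dist (f x) (g x) > d}" using a by (simp add: A_def dist_commute)
    qed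
    have "open {x. dist (f x) (g x) > d}"
      using cont by (auto intro: open_Collect_less continuous_intros simp: continuous_on_const)
    hence "{x. dist (f x) (g x) > d} \<in> sets N" using sN by auto
    hence "measure N (open_nbhd e A) \<le> measure N {x. dist (f x) (g x) > d}"
      using sub prob_space.finite_measure[OF pN] by (intro finite_measure.finite_measure_mono) auto
    also have "\<dots> \<le> d" using d spN by simp
    finally have "measure M A \<le> d + 2 * e" using H Ab e by force
    hence "d + 2 * e \<in> ?S M" using d e spM by (auto simp: A_def)
    hence "Inf (?S M) \<le> d + 2 * e" using kf_set_props(2)[OF pM] by (intro cInf_lower)
    thus "ky_fan M f g - 2 * e \<le> d" unfolding ky_fan_def by simp
  qed
  thus ?thesis unfolding ky_fan_def by simp
qed

lemma flip:
  fixes M N :: "'a::metric_space measure"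
  assumes sM: "sets M = sets borel" and pM: "prob_space M"
    and sN: "sets N = sets borel" and pN: "prob_space N"
    and H: "\<forall>A\<in>sets borel. measure M (open_nbhd e A) \<ge> measure N A - e"
    and Ab: "A \<in> sets borel"
  shows "measure M A \<le> measure N (open_nbhd e A) + e"
proof -
  have spM: "space M = UNIV" using sM by (rule space_borel_eq)
  have spN: "space N = UNIV" using sN by (rule space_borel_eq)
  define B where "B = UNIV - open_nbhd e A"
  have Bb: "B \<in> sets borel" unfolding B_def using nbhd_open[of e A] by auto
  have sub: "open_nbhd e B \<subseteq> UNIV - A"
    unfolding B_def open_nbhd_def by (auto simp: dist_commute) (metis dist_commute)
  have o: "open_nbhd e A \<in> sets N" using nbhd_open[of e A] sN by auto
  have "measure N B = 1 - measure N (open_nbhd e A)"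
    using prob_space.prob_compl[OF pN o] spN by (simp add: B_def)
  moreover have "measure M (open_nbhd e B) \<le> measure M (UNIV - A)"
    using sub nbhd_open[of e B] sM Ab prob_space.finite_measure[OF pM]
    by (intro finite_measure.finite_measure_mono) auto
  moreover have "measure M (UNIV - A) = 1 - measure M A"
    using prob_space.prob_compl[of M A] pM sM Ab spM by simp
  moreover have "measure M (open_nbhd e B) \<ge> measure N B - e" using H Bb by blast
  ultimately show ?thesis by linarith
qed

theorem lemma5p6:
  fixes f g :: "'a::metric_space \<Rightarrow> 'b::metric_space"
    and \<mu> \<nu> :: "'a measure"
  assumes "1-lipschitz_on UNIV f" and "1-lipschitz_on UNIV g"
    and "sets \<mu> = sets borel" and "prob_space \<mu>"
    and "sets \<nu> = sets borel" and "prob_space \<nu>"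
  shows "\<bar>ky_fan \<mu> f g - ky_fan \<nu> f g\<bar> \<le> 2 * prohorov \<mu> \<nu>"
proof -
  let ?P = "{\<epsilon>::real. \<epsilon> > 0 \<and>
     (\<forall>A \<in> sets borel. measure \<mu> (open_nbhd \<epsilon> A) \<ge> measure \<nu> A - \<epsilon>)}"
  have "1 \<in> ?P" using prob_space.prob_le_1[OF assms(6)] measure_nonneg[of \<mu>]
    by (auto simp: algebra_simps intro: order_trans[OF _ add_increasing2])
  hence ne: "?P \<noteq> {}" by blast
  have "\<bar>ky_fan \<mu> f g - ky_fan \<nu> f g\<bar> / 2 \<le> Inf ?P"
  proof (rule cInf_greatest[OF ne])
    fix e assume e: "e \<in> ?P"
    have "ky_fan \<nu> f g \<le> ky_fan \<mu> f g + 2 * e"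
      using e by (intro key[OF assms(1,2) assms(5,6) assms(3,4)]) (auto simp: algebra_simps)
    moreover have "ky_fan \<mu> f g \<le> ky_fan \<nu> f g + 2 * e"
      using e flip[OF assms(3,4,5,6)]
      by (intro key[OF assms(1,2) assms(3,4) assms(5,6)]) auto
    ultimately show "\<bar>ky_fan \<mu> f g - ky_fan \<nu> f g\<bar> / 2 \<le> e" by (simp add: abs_le_iff)
  qed
  thus ?thesis unfolding prohorov_def by simp
qed

end
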